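(* Let $G$ be a finite connected bipartite graph with bipartition $(X,Y)$ such that for each $k\le\Delta(G)$ every $k$-element subset of $X$ and every $k$-element subset of $Y$ has a common neighbour. Then $G$ is $\mathcal{C}$-$\mathrm{HH}$.
   Context: $\Delta(G)$ is the maximum degree of $G$. A common neighbour of a vertex set $S$ is a vertex adjacent to every vertex of $S$. Subgraphs are induced; a homomorphism maps edges to edges. A graph $G$ is $\mathcal{C}$-$\mathrm{HH}$ if every homomorphism from a finite connected induced subgraph of $G$ into $G$ extends to a homomorphism $G\to G$. *)

theory Defs
  imports Main
begin

definition sgraph :: "'a set \<Rightarrow> ('a \<Rightarrow> 'a \<Rightarrow> bool) \<Rightarrow> bool" where
  "sgraph V E \<longleftrightarrow> (\<forall>u v. E u v \<longrightarrow> u \<in> V \<and> v \<in> V) \<and>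
                   (\<forall>u v. E u v \<longrightarrow> E v u) \<and> (\<forall>v. \<not> E v v)"

definition connected_induced :: "'a set \<Rightarrow> ('a \<Rightarrow> 'a \<Rightarrow> bool) \<Rightarrow> bool" where
  "connected_induced S E \<longleftrightarrow> S \<noteq> {} \<and>
     (\<forall>u\<in>S. \<forall>v\<in>S. (\<lambda>x y. x \<in> S \<and> y \<in> S \<and> E x y)\<^sup>*\<^sup>* u v)"

definition degree :: "'a set \<Rightarrow> ('a \<Rightarrow> 'a \<Rightarrow> bool) \<Rightarrow> 'a \<Rightarrow> nat" where
  "degree V E v = card {w \<in> V. E v w}"

definition max_degree :: "'a set \<Rightarrow> ('a \<Rightarrow> 'a \<Rightarrow> bool) \<Rightarrow> nat" where
  "max_degree V E = Max (degree V E ` V)"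

definition bipartition :: "'a set \<Rightarrow> ('a \<Rightarrow> 'a \<Rightarrow> bool) \<Rightarrow> 'a set \<Rightarrow> 'a set \<Rightarrow> bool" where
  "bipartition V E X Y \<longleftrightarrow> X \<union> Y = V \<and> X \<inter> Y = {} \<and>
     (\<forall>u v. E u v \<longrightarrow> (u \<in> X \<and> v \<in> Y) \<or> (u \<in> Y \<and> v \<in> X))"

definition common_neighbour :: "'a set \<Rightarrow> ('a \<Rightarrow> 'a \<Rightarrow> bool) \<Rightarrow> 'a set \<Rightarrow> 'a \<Rightarrow> bool" where
  "common_neighbour V E S w \<longleftrightarrow> w \<in> V \<and> (\<forall>s\<in>S. E w s)"

definition hom_on :: "'a set \<Rightarrow> ('a \<Rightarrow> 'a \<Rightarrow> bool) \<Rightarrow> 'a set \<Rightarrow> ('a \<Rightarrow> 'a \<Rightarrow> bool) \<Rightarrow> ('a \<Rightarrow> 'a) \<Rightarrow> bool" where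
  "hom_on S E W E' f \<longleftrightarrow> f ` S \<subseteq> W \<and> (\<forall>u\<in>S. \<forall>v\<in>S. E u v \<longrightarrow> E' (f u) (f v))"

definition C_HH :: "'a set \<Rightarrow> ('a \<Rightarrow> 'a \<Rightarrow> bool) \<Rightarrow> bool" where
  "C_HH V E \<longleftrightarrow> (\<forall>S f. S \<subseteq> V \<and> finite S \<and> connected_induced S E \<and> hom_on S E V E f \<longrightarrow>
      (\<exists>g. hom_on V E V E g \<and> (\<forall>x\<in>S. g x = f x)))"

end

theory Submission
  imports Defs
begin

lemma side_lemma:
  assumes bp: "bipartition V E X Y"
    and PQ: "(P = X \<and> Q = Y) \<or> (P = Y \<and> Q = X)"
    and e: "E w a" and a: "a \<in> Q"
  shows "w \<in> P"
  using assms unfolding bipartition_def by blast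

lemma side_lemma2:
  assumes bp: "bipartition V E X Y"
    and PQ: "(P = X \<and> Q = Y) \<or> (P = Y \<and> Q = X)"
    and e: "E w a" and a: "a \<in> P"
  shows "w \<in> Q"
  using assms unfolding bipartition_def by blast

theorem lemma5p4:
  fixes V X Y :: "'a set" and E :: "'a \<Rightarrow> 'a \<Rightarrow> bool"
  assumes "sgraph V E" and "finite V" and "connected_induced V E"
    and "bipartition V E X Y"
    and "\<And>k A. 1 \<le> k \<Longrightarrow> k \<le> max_degree V E \<Longrightarrow> A \<subseteq> X \<Longrightarrow> card A = k \<Longrightarrow>
            \<exists>w. common_neighbour V E A w"
    and "\<And>k B. 1 \<le> k \<Longrightarrow> k \<le> max_degree V E \<Longrightarrow> B \<subseteq> Y \<Longrightarrow> card B = k \<Longrightarrow>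
            \<exists>w. common_neighbour V E B w"
  shows "C_HH V E"
  unfolding C_HH_def
proof (intro allI impI)
  note sg = assms(1) and finV = assms(2) and bp = assms(4)
  note cnX = assms(5) and cnY = assms(6)
  fix S f assume H: "S \<subseteq> V \<and> finite S \<and> connected_induced S E \<and> hom_on S E V E f"
  hence SV: "S \<subseteq> V" and conS: "connected_induced S E" and hf: "hom_on S E V E f" by auto
  from conS obtain s0 where s0: "s0 \<in> S" unfolding connected_induced_def by blast
  have VXY: "V = X \<union> Y" and XY: "X \<inter> Y = {}" using bp unfolding bipartition_def by auto
  have fV: "\<And>x. x \<in> S \<Longrightarrow> f x \<in> V" using hf unfolding hom_on_def by auto
  define P where "P = (if (s0 \<in> X \<longleftrightarrow> f s0 \<in> X) then X else Y)"
  define Q where "Q = (if (s0 \<in> X \<longleftrightarrow> f s0 \<in> X) then Y else X)"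
  have PQ: "(P = X \<and> Q = Y) \<or> (P = Y \<and> Q = X)" unfolding P_def Q_def by auto
  have s0V: "s0 \<in> V" "f s0 \<in> V" using s0 SV fV by auto
  have PV: "P \<subseteq> V" "Q \<subseteq> V" using PQ VXY by auto
  have NS: "\<And>T v. {u \<in> S \<union> T. E v u} \<subseteq> S \<union> T" by blast
  have Pne: "\<And>v. v \<in> X \<Longrightarrow> P \<noteq> {}" and Qne: "\<And>v. v \<in> Y \<Longrightarrow> Q \<noteq> {}"
    unfolding P_def Q_def using s0V VXY XY by (auto split: if_splits)
  have inv_S: "\<forall>x\<in>S. (x \<in> X \<longrightarrow> f x \<in> P) \<and> (x \<in> Y \<longrightarrow> f x \<in> Q)"
  proof
    fix x assume x: "x \<in> S"
    have "(\<lambda>x y. x \<in> S \<and> y \<in> S \<and> E x y)\<^sup>*\<^sup>* s0 x"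
      using conS s0 x unfolding connected_induced_def by blast
    then show "(x \<in> X \<longrightarrow> f x \<in> P) \<and> (x \<in> Y \<longrightarrow> f x \<in> Q)"
    proof (induction rule: rtranclp_induct)
      case base
      then show ?case unfolding P_def Q_def using s0V VXY XY by auto
    next
      case (step y z)
      have Eyz: "E y z" and yS: "y \<in> S" and zS: "z \<in> S" using step by auto
      have Ef: "E (f y) (f z)" using hf yS zS Eyz unfolding hom_on_def by auto
      have Ef': "E (f z) (f y)" using sg Ef unfolding sgraph_def by blast
      have "z \<in> X \<longrightarrow> y \<in> Y" "z \<in> Y \<longrightarrow> y \<in> X"
        using bp Eyz XY unfolding bipartition_def by blast+
      then show ?case using step.IH side_lemma[OF bp PQ Ef'] side_lemma2[OF bp PQ Ef'] XY
        by auto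
    qed
  qed
  have main: "\<And>T. finite T \<Longrightarrow> T \<subseteq> V - S \<Longrightarrow> \<exists>g. hom_on (S \<union> T) E V E g \<and> (\<forall>x\<in>S. g x = f x)
      \<and> (\<forall>x\<in>S \<union> T. (x \<in> X \<longrightarrow> g x \<in> P) \<and> (x \<in> Y \<longrightarrow> g x \<in> Q))"
  proof -
    fix T :: "'a set" assume "finite T" "T \<subseteq> V - S"
    then show "\<exists>g. hom_on (S \<union> T) E V E g \<and> (\<forall>x\<in>S. g x = f x)
      \<and> (\<forall>x\<in>S \<union> T. (x \<in> X \<longrightarrow> g x \<in> P) \<and> (x \<in> Y \<longrightarrow> g x \<in> Q))"
    proof (induction T rule: finite_induct)
      case empty
      then show ?case using hf inv_S by auto
    next
      case (insert v T)
      have TS: "T \<subseteq> V - S" using insert.prems by blast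
      obtain g where hg: "hom_on (S \<union> T) E V E g" and ag: "\<forall>x\<in>S. g x = f x"
        and ig: "\<forall>x\<in>S \<union> T. (x \<in> X \<longrightarrow> g x \<in> P) \<and> (x \<in> Y \<longrightarrow> g x \<in> Q)"
        using insert.IH[OF TS] by blast
      have vV: "v \<in> V" and vS: "v \<notin> S" using insert.prems by blast+
      have vT: "v \<notin> T" using insert.hyps by blast
      define N where "N = {u \<in> S \<union> T. E v u}"
      define A where "A = g ` N"
      have NV: "N \<subseteq> {w \<in> V. E v w}" unfolding N_def using TS SV by blast
      have finD: "finite {w \<in> V. E v w}" using finV by simp
      have finN: "finite N" using finite_subset[OF NV finD] .
      have cardA: "card A \<le> max_degree V E"
      proof -
        have "card A \<le> card N" unfolding A_def using finN card_image_le by blast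
        also have "\<dots> \<le> degree V E v" unfolding degree_def
          using card_mono[OF finD NV] .
        also have "\<dots> \<le> max_degree V E" unfolding max_degree_def
          using finV vV by (intro Max_ge) simp_all
        finally show ?thesis .
      qed
      have "\<exists>w. w \<in> V \<and> (\<forall>a\<in>A. E w a) \<and> (v \<in> X \<longrightarrow> w \<in> P) \<and> (v \<in> Y \<longrightarrow> w \<in> Q)"
      proof (cases "A = {}")
        case True
        have "v \<in> X \<or> v \<in> Y" using vV VXY by auto
        then show ?thesis
        proof
          assume vX: "v \<in> X"
          then obtain w where "w \<in> P" using Pne by blast
          moreover have "v \<notin> Y" using vX XY by auto
          ultimately show ?thesis using True PV by blast
        next
          assume vY: "v \<in> Y"
          then obtain w where "w \<in> Q" using Qne by blast
          moreover have "v \<notin> X" using vY XY by auto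
          ultimately show ?thesis using True PV by blast
        qed
      next
        case False
        have finA: "finite A" unfolding A_def using finN by auto
        have k1: "1 \<le> card A" using False finA by (simp add: Suc_le_eq card_gt_0_iff)
        have "v \<in> X \<or> v \<in> Y" using vV VXY by auto
        then show ?thesis
        proof
          assume vX: "v \<in> X"
          have vnY: "v \<notin> Y" using vX XY by auto
          have NY: "N \<subseteq> Y" unfolding N_def using bp vX XY unfolding bipartition_def by blast
          have AQ: "A \<subseteq> Q"
          proof
            fix a assume "a \<in> A"
            then obtain u where u: "u \<in> N" "a = g u" unfolding A_def by blast
            have "u \<in> S \<union> T" using u(1) unfolding N_def by blast
            moreover have "u \<in> Y" using u(1) NY by blast
            ultimately show "a \<in> Q" using ig u(2) by blast
          qed
          have "\<exists>w. common_neighbour V E A w"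
            using PQ AQ cnX[OF k1 cardA] cnY[OF k1 cardA] by blast
          then obtain w where w: "w \<in> V" "\<forall>a\<in>A. E w a" unfolding common_neighbour_def by blast
          obtain a where "a \<in> A" using False by blast
          hence "w \<in> P" using side_lemma[OF bp PQ] w AQ by blast
          then show ?thesis using w vnY by blast
        next
          assume vY: "v \<in> Y"
          have vnX: "v \<notin> X" using vY XY by auto
          have NX: "N \<subseteq> X" unfolding N_def using bp vY XY unfolding bipartition_def by blast
          have AP: "A \<subseteq> P"
          proof
            fix a assume "a \<in> A"
            then obtain u where u: "u \<in> N" "a = g u" unfolding A_def by blast
            have "u \<in> S \<union> T" using u(1) unfolding N_def by blast
            moreover have "u \<in> X" using u(1) NX by blast
            ultimately show "a \<in> P" using ig u(2) by blast
          qed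
          have "\<exists>w. common_neighbour V E A w"
            using PQ AP cnX[OF k1 cardA] cnY[OF k1 cardA] by blast
          then obtain w where w: "w \<in> V" "\<forall>a\<in>A. E w a" unfolding common_neighbour_def by blast
          obtain a where "a \<in> A" using False by blast
          hence "w \<in> Q" using side_lemma2[OF bp PQ] w AP by blast
          then show ?thesis using w vnX by blast
        qed
      qed
      then obtain w where w: "w \<in> V" "\<forall>a\<in>A. E w a" "v \<in> X \<longrightarrow> w \<in> P" "v \<in> Y \<longrightarrow> w \<in> Q"
        by blast
      define g' where "g' = g(v := w)"
      have eqg: "\<And>x. x \<in> S \<union> T \<Longrightarrow> g' x = g x" unfolding g'_def using vS vT by auto
      have Ev: "\<And>u. u \<in> S \<union> T \<Longrightarrow> E v u \<Longrightarrow> E w (g u)"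
        using w(2) unfolding A_def N_def by auto
      have sym: "\<And>a b. E a b \<Longrightarrow> E b a" and irr: "\<And>a. \<not> E a a"
        using sg unfolding sgraph_def by blast+
      have "hom_on (S \<union> insert v T) E V E g'"
        unfolding hom_on_def
      proof (intro conjI ballI impI)
        show "g' ` (S \<union> insert v T) \<subseteq> V" using hg w(1) eqg unfolding hom_on_def g'_def
          by auto
      next
        fix x y assume x: "x \<in> S \<union> insert v T" and y: "y \<in> S \<union> insert v T" and Exy: "E x y"
        show "E (g' x) (g' y)"
        proof (cases "x = v")
          case True
          hence "y \<noteq> v" using irr Exy by auto
          hence "y \<in> S \<union> T" using y by auto
          then show ?thesis using True Ev Exy eqg unfolding g'_def by auto
        next
          case xv: False
          hence xS: "x \<in> S \<union> T" using x by auto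
          show ?thesis
          proof (cases "y = v")
            case True
            have "E v x" using sym Exy True by blast
            hence "E w (g x)" using Ev[OF xS] by blast
            hence "E (g x) w" using sym by blast
            then show ?thesis using True xS eqg unfolding g'_def by simp
          next
            case False
            hence "y \<in> S \<union> T" using y by auto
            then show ?thesis using hg xS Exy eqg unfolding hom_on_def by auto
          qed
        qed
      qed
      moreover have "\<forall>x\<in>S. g' x = f x" using ag eqg by auto
      moreover have "\<forall>x\<in>S \<union> insert v T. (x \<in> X \<longrightarrow> g' x \<in> P) \<and> (x \<in> Y \<longrightarrow> g' x \<in> Q)"
        using ig eqg w unfolding g'_def by auto
      ultimately show ?case by blast
    qed
  qed
  have "finite (V - S)" using finV by auto
  from main[OF this] obtain g where "hom_on (S \<union> (V - S)) E V E g" "\<forall>x\<in>S. g x = f x" by blast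
  moreover have "S \<union> (V - S) = V" using SV by auto
  ultimately show "\<exists>g. hom_on V E V E g \<and> (\<forall>x\<in>S. g x = f x)" by auto
qed

end
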